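(* Fix $\beta\in(0,1)$, $C_{\log}>0$, positive learning rates $\gamma^t_i,\gamma^{t+1}_i$ ($i\in[K]$), nonnegative loss-estimate vectors $\hat\ell^1,\dots,\hat\ell^t\in\mathbb{R}^K$, and a partition $[K]=U\cup V$ with $U\ne\emptyset$. With $p^t,p^{t+1},q^t,q^{t+1},\bar p^{t+1}$ as defined in the context, $$D^{t,t+1}(p^t,p^{t+1})-D^{t,t+1}_U(q^t,q^{t+1})\le D^{t,t+1}_V(p^t,\bar p^{t+1})+\Big(D^{t,t+1}_U(p^t,\bar p^{t+1})-D^{t,t+1}_U(q^t,q^{t+1})\Big)+D^{t+1}(\bar p^{t+1},p^{t+1}).$$
   Context: Regularizer: $\phi^s(x)=-C_{\log}\sum_{i\in[K]}\log x_i-\frac{1}{1-\beta}\sum_{i\in[K]}\gamma^s_ix_i^\beta$ for $s\in\{t,t+1\}$; for $\mathcal{I}\subseteq[K]$, $\phi^s_{\mathcal{I}}(x)=-C_{\log}\sum_{i\in\mathcal{I}}\log x_i-\frac{1}{1-\beta}\sum_{i\in\mathcal{I}}\gamma^s_ix_i^\beta$. Skewed Bregman divergences: $D^{s,r}(x,y)=\phi^s(x)-\phi^r(y)-\langle\nabla\phi^r(y),x-y\rangle$, $D^{s,r}_{\mathcal{I}}(x,y)=\phi^s_{\mathcal{I}}(x)-\phi^r_{\mathcal{I}}(y)-\langle\nabla\phi^r_{\mathcal{I}}(y),x-y\rangle$ (which only involves coordinates in $\mathcal{I}$), and $D^s=D^{s,s}$. $\Omega_K$ is the simplex, $\Omega_U=\{p\in\Omega_K:\sum_{i\in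 U}p_i=1\}$. Define $p^s=\arg\min_{p\in\Omega_K}\langle p,\sum_{\tau<s}\hat\ell^\tau\rangle+\phi^s(p)$ and $q^s=\arg\min_{p\in\Omega_U}\langle p,\sum_{\tau<s}\hat\ell^\tau\rangle+\phi^s(p)$ for $s\in\{t,t+1\}$. Define $\bar p^{t+1}=\bar p^{t+1}_U+\bar p^{t+1}_V$ where $\bar p^{t+1}_U=\arg\min\{\langle x,\sum_{\tau\le t}\hat\ell^\tau\rangle+\phi^{t+1}_U(x): x\in\mathbb{R}^K_{\ge0},\ \sum_{i\in V}x_i=0,\ \sum_{i\in U}x_i=\sum_{i\in U}p^t_i\}$ and $\bar p^{t+1}_V=\arg\min\{\langle x,\sum_{\tau\le t}\hat\ell^\tau\rangle+\phi^{t+1}_V(x): x\in\mathbb{R}^K_{\ge0},\ \sum_{i\in U}x_i=0,\ \sum_{i\in V}x_i=\sum_{i\in V}p^t_i\}$. *)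

theory Defs
  imports "HOL-Analysis.Analysis"
begin

text \<open>Arms are indexed by a finite type 'k (so [K] = UNIV, K = CARD('k)).
  Restricted regularizer phi^s_I with learning-rate vector gam = gamma^s.\<close>
definition phiI :: "real \<Rightarrow> real \<Rightarrow> real^'k \<Rightarrow> 'k set \<Rightarrow> real^'k \<Rightarrow> real" where
  "phiI C \<beta> gam I x =
     - C * (\<Sum>i\<in>I. ln (x$i)) - 1 / (1 - \<beta>) * (\<Sum>i\<in>I. gam$i * (x$i) powr \<beta>)"

definition gradphi :: "real \<Rightarrow> real \<Rightarrow> real^'k \<Rightarrow> real^'k \<Rightarrow> 'k \<Rightarrow> real" where
  "gradphi C \<beta> gam y i = - C / (y$i) - gam$i * \<beta> / (1 - \<beta>) * (y$i) powr (\<beta> - 1)"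

text \<open>Skewed Bregman divergence D^{s,r}_I(x,y), gs = gamma^s, gr = gamma^r.\<close>
definition DI :: "real \<Rightarrow> real \<Rightarrow> real^'k \<Rightarrow> real^'k \<Rightarrow> 'k set \<Rightarrow> real^'k \<Rightarrow> real^'k \<Rightarrow> real" where
  "DI C \<beta> gs gr I x y =
     phiI C \<beta> gs I x - phiI C \<beta> gr I y - (\<Sum>i\<in>I. gradphi C \<beta> gr y i * (x$i - y$i))"

text \<open>Nonnegative vectors supported on I with total mass c, strictly positive on I
  (the log barrier forces minimizers into this set).\<close>
definition restr_simplex :: "'k set \<Rightarrow> real \<Rightarrow> (real^'k) set" where
  "restr_simplex I c = {x. (\<forall>i. 0 \<le> x$i) \<and> (\<forall>i\<in>I. 0 < x$i) \<and> (\<forall>i\<in>-I. x$i = 0)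
                           \<and> (\<Sum>i\<in>I. x$i) = c}"

definition argmin_on :: "'a set \<Rightarrow> ('a \<Rightarrow> real) \<Rightarrow> 'a" where
  "argmin_on S f = (SOME x. x \<in> S \<and> (\<forall>y\<in>S. f x \<le> f y))"

definition ftrl :: "real \<Rightarrow> real \<Rightarrow> real^'k \<Rightarrow> 'k set \<Rightarrow> real \<Rightarrow> real^'k \<Rightarrow> real^'k" where
  "ftrl C \<beta> gam I c L =
     argmin_on (restr_simplex I c) (\<lambda>x. (\<Sum>i\<in>UNIV. x$i * L$i) + phiI C \<beta> gam I x)"

end

theory Submission imports Defs begin

definition obj :: "real \<Rightarrow> real \<Rightarrow> real^'k \<Rightarrow> 'k set \<Rightarrow> real^'k \<Rightarrow> real^'k \<Rightarrow> real" where
  "obj C \<beta> gam I L x = (\<Sum>i\<in>UNIV. x$i * L$i) + phiI C \<beta> gam I x"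

definition hk :: "real \<Rightarrow> real \<Rightarrow> real^'k \<Rightarrow> real^'k \<Rightarrow> 'k \<Rightarrow> real \<Rightarrow> real" where
  "hk C \<beta> gam L k s = s * L$k - C * ln s - 1 / (1 - \<beta>) * (gam$k * s powr \<beta>)"

lemma ftrl_eq: "ftrl C \<beta> gam I c L = argmin_on (restr_simplex I c) (obj C \<beta> gam I L)"
  unfolding ftrl_def obj_def[abs_def] by simp

lemma obj_sum:
  assumes "\<forall>i\<in>-I. x$i = 0"
  shows "obj C \<beta> gam I L x = (\<Sum>k\<in>I. hk C \<beta> gam L k (x$k))"
proof -
  have "(\<Sum>i\<in>UNIV. x$i * L$i) = (\<Sum>i\<in>I. x$i * L$i)"
    by (rule sum.mono_neutral_right) (use assms in auto)
  then show ?thesis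
    unfolding obj_def phiI_def hk_def
    by (simp add: sum_subtractf sum_distrib_left sum_divide_distrib sum_negf)
qed

lemma hk_deriv:
  assumes "0 < s" "\<beta> < 1" and that: "x$k = s"
  shows "(hk C \<beta> gam L k has_real_derivative (L$k + gradphi C \<beta> gam x k)) (at s)"
proof -
  have "(hk C \<beta> gam L k has_real_derivative (L$k - C * (1/s) - 1/(1-\<beta>) * (gam$k * (\<beta> * s powr (\<beta> - 1))))) (at s)"
    unfolding hk_def[abs_def] using assms
    by (auto intro!: derivative_eq_intros has_real_derivative_powr)
  moreover have "L$k + gradphi C \<beta> gam x k = L$k - C * (1/s) - 1/(1-\<beta>) * (gam$k * (\<beta> * s powr (\<beta> - 1)))"
    unfolding gradphi_def using that by (simp add: algebra_simps)
  ultimately show ?thesis by metis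
qed

lemma kkt:
  assumes b: "\<beta> < 1"
    and xS: "x \<in> restr_simplex I c"
    and xmin: "\<forall>y\<in>restr_simplex I c. obj C \<beta> gam I L x \<le> obj C \<beta> gam I L y"
    and ij: "i \<in> I" "j \<in> I"
  shows "L$i + gradphi C \<beta> gam x i = L$j + gradphi C \<beta> gam x j"
proof (cases "i = j")
  case True then show ?thesis by simp
next
  case False
  have xpos: "\<forall>k\<in>I. 0 < x$k" and xz: "\<forall>k\<in>-I. x$k = 0" and x0: "\<forall>k. 0 \<le> x$k"
    and xs: "(\<Sum>k\<in>I. x$k) = c"
    using xS unfolding restr_simplex_def by auto
  define d where "d = min (x$i) (x$j)"
  have d: "0 < d" using xpos ij unfolding d_def by auto
  define y where "y s = (\<chi> k. if k = i then x$i + s else if k = j then x$j - s else x$k)" for s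
  define g where "g s = hk C \<beta> gam L i (x$i + s) + hk C \<beta> gam L j (x$j - s)" for s
  have ymem: "y s \<in> restr_simplex I c" if "\<bar>s\<bar> < d" for s
  proof -
    have "(\<Sum>k\<in>I. y s $ k) = (\<Sum>k\<in>I. x$k + (if k = i then s else 0) - (if k = j then s else 0))"
      by (rule sum.cong) (use False in \<open>auto simp: y_def\<close>)
    also have "\<dots> = c"
      using ij xs by (simp add: sum.distrib sum_subtractf)
    finally show ?thesis
      using that xpos xz x0 ij False unfolding restr_simplex_def y_def d_def by auto
  qed
  have yobj: "obj C \<beta> gam I L (y s) - obj C \<beta> gam I L x = g s - g 0" for s
  proof -
    have yz: "\<forall>k\<in>-I. y s $ k = 0" using xz ij unfolding y_def by auto
    have "obj C \<beta> gam I L (y s) - obj C \<beta> gam I L x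
        = (\<Sum>k\<in>I. hk C \<beta> gam L k (y s $ k) - hk C \<beta> gam L k (x $ k))"
      using obj_sum[OF yz] obj_sum[OF xz] by (simp add: sum_subtractf)
    also have "\<dots> = (\<Sum>k\<in>I. (if k = i then hk C \<beta> gam L i (x$i + s) - hk C \<beta> gam L i (x$i) else 0)
                + (if k = j then hk C \<beta> gam L j (x$j - s) - hk C \<beta> gam L j (x$j) else 0))"
      by (rule sum.cong) (use False in \<open>auto simp: y_def\<close>)
    also have "\<dots> = g s - g 0"
      using ij by (simp add: sum.distrib g_def)
    finally show ?thesis .
  qed
  have gmin: "\<forall>s. \<bar>0 - s\<bar> < d \<longrightarrow> g 0 \<le> g s"
    using xmin ymem yobj by (metis abs_minus_commute diff_0 diff_ge_0_iff_ge abs_minus_cancel)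
  have di: "(hk C \<beta> gam L i has_real_derivative (L$i + gradphi C \<beta> gam x i)) (at (x$i + 0))"
    using hk_deriv[of "x$i + 0" \<beta> x i] xpos ij b by simp
  have dj: "(hk C \<beta> gam L j has_real_derivative (L$j + gradphi C \<beta> gam x j)) (at (x$j - 0))"
    using hk_deriv[of "x$j - 0" \<beta> x j] xpos ij b by simp
  have "(g has_real_derivative ((L$i + gradphi C \<beta> gam x i) * 1 + (L$j + gradphi C \<beta> gam x j) * (0 - 1))) (at 0)"
    unfolding g_def[abs_def]
    by (intro derivative_intros DERIV_chain2[where g="\<lambda>s. x$i + s", OF di] DERIV_chain2[where g="\<lambda>s. x$j - s", OF dj]) (auto intro!: derivative_eq_intros)
  from DERIV_local_min[OF this d gmin] show ?thesis by simp
qed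

lemma hk_lb:
  assumes C: "0 < C" and b: "0 < \<beta>" "\<beta> < 1" and g: "0 < gam$k" and L: "0 \<le> L$k"
    and s: "0 < s" "s \<le> c"
  shows "hk C \<beta> gam L k s \<ge> (- C * ln c - 1/(1-\<beta>) * (gam$k * c powr \<beta>)) + C * (ln c - ln s)"
proof -
  have "s powr \<beta> \<le> c powr \<beta>" using s b by (intro powr_mono2) auto
  then have "gam$k * s powr \<beta> \<le> gam$k * c powr \<beta>" using g by simp
  then have "1/(1-\<beta>) * (gam$k * s powr \<beta>) \<le> 1/(1-\<beta>) * (gam$k * c powr \<beta>)"
    by (rule mult_left_mono) (use b in auto)
  moreover have "0 \<le> s * L$k" using s L by simp
  ultimately show ?thesis unfolding hk_def by (simp add: algebra_simps)
qed

lemma exists_min: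
  fixes gam L :: "real^'k" and I :: "'k set"
  assumes C: "0 < C" and b: "0 < \<beta>" "\<beta> < 1" and g: "\<forall>i. 0 < gam$i" and L: "\<forall>i. 0 \<le> L$i"
    and I: "I \<noteq> {}" and c: "0 < c"
  shows "\<exists>x\<in>restr_simplex I c. \<forall>y\<in>restr_simplex I c. obj C \<beta> gam I L x \<le> obj C \<beta> gam I L y"
proof -
  define n where "n = card I"
  have n: "0 < n" using I unfolding n_def by (simp add: card_gt_0_iff)
  define x0 :: "real^'k" where "x0 = (\<chi> i. if i \<in> I then c / n else 0)"
  define m where "m k = - C * ln c - 1/(1-\<beta>) * (gam$k * c powr \<beta>)" for k
  define B where "B = obj C \<beta> gam I L x0 - (\<Sum>k\<in>I. m k)"
  define e where "e = min (c / n) (c * exp (- \<bar>B\<bar> / C))"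
  have e: "0 < e" using n c unfolding e_def by simp
  have lne: "ln e \<le> ln c - \<bar>B\<bar> / C"
  proof -
    have "ln e \<le> ln (c * exp (- \<bar>B\<bar> / C))" using e unfolding e_def by simp
    also have "\<dots> = ln c - \<bar>B\<bar> / C" using c by (simp add: ln_mult)
    finally show ?thesis .
  qed
  define K where "K = {x::real^'k. (\<forall>i. 0 \<le> x$i) \<and> (\<forall>i. i \<in> I \<longrightarrow> e \<le> x$i) \<and> (\<forall>i. i \<notin> I \<longrightarrow> x$i = 0) \<and> (\<Sum>i\<in>I. x$i) = c}"
  have x0K: "x0 \<in> K"
    using n c unfolding K_def x0_def e_def n_def by auto
  have Kle: "x$i \<le> c" if "x \<in> K" for x i
  proof (cases "i \<in> I")
    case True
    then have "x$i \<le> (\<Sum>i\<in>I. x$i)" using that unfolding K_def by (intro member_le_sum) auto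
    then show ?thesis using that unfolding K_def by simp
  next
    case False then show ?thesis using that c unfolding K_def by simp
  qed
  have "K \<subseteq> cbox 0 (\<chi> i. c)"
    using Kle unfolding K_def by (auto simp: mem_box_cart)
  then have bK: "bounded K" by (rule bounded_subset[OF bounded_cbox])
  have cK: "closed K"
    unfolding K_def
    by (intro closed_Collect_conj closed_Collect_all closed_Collect_imp closed_Collect_le closed_Collect_eq
          continuous_intros open_Collect_neg closed_Collect_const) auto
  have contK: "continuous_on K (obj C \<beta> gam I L)"
    unfolding obj_def[abs_def] phiI_def using e unfolding K_def
    by (intro continuous_intros) (auto dest: order.strict_trans2)
  obtain xm where xm: "xm \<in> K" "\<forall>y\<in>K. obj C \<beta> gam I L xm \<le> obj C \<beta> gam I L y"
    using continuous_attains_inf[OF compact_eq_bounded_closed[THEN iffD2, OF conjI[OF bK cK]] _ contK] x0K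
    by blast
  have sub: "K \<subseteq> restr_simplex I c" using e unfolding K_def restr_simplex_def by force
  show ?thesis
  proof (intro bexI[of _ xm] ballI)
    fix y assume y: "y \<in> restr_simplex I c"
    show "obj C \<beta> gam I L xm \<le> obj C \<beta> gam I L y"
    proof (cases "y \<in> K")
      case True then show ?thesis using xm by blast
    next
      case False
      have ypos: "\<forall>k\<in>I. 0 < y$k" and yz: "\<forall>k\<in>-I. y$k = 0" and y0: "\<forall>k. 0 \<le> y$k"
        and ys: "(\<Sum>k\<in>I. y$k) = c"
        using y unfolding restr_simplex_def by auto
      obtain j where j: "j \<in> I" "y$j < e" using False y unfolding K_def restr_simplex_def by force
      have yle: "y$k \<le> c" if "k \<in> I" for k
        using member_le_sum[of k I "\<lambda>k. y$k"] that y0 ys by simp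
      have "obj C \<beta> gam I L y = (\<Sum>k\<in>I. hk C \<beta> gam L k (y$k))" by (rule obj_sum[OF yz])
      also have "\<dots> \<ge> (\<Sum>k\<in>I. m k + C * (ln c - ln (y$k)))"
        unfolding m_def using ypos yle C b g L by (intro sum_mono hk_lb) auto
      finally have A: "(\<Sum>k\<in>I. m k) + (\<Sum>k\<in>I. C * (ln c - ln (y$k))) \<le> obj C \<beta> gam I L y"
        by (simp add: sum.distrib)
      have "C * (ln c - ln (y$j)) \<le> (\<Sum>k\<in>I. C * (ln c - ln (y$k)))"
        using j ypos yle C c by (intro member_le_sum) (auto intro!: mult_nonneg_nonneg)
      moreover have "ln (y$j) < ln e" using j ypos e by simp
      then have "C * (ln c - ln e) < C * (ln c - ln (y$j))" using C by simp
      moreover have "\<bar>B\<bar> \<le> C * (ln c - ln e)" using lne C by (simp add: field_simps)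
      ultimately have "B < (\<Sum>k\<in>I. C * (ln c - ln (y$k)))" by linarith
      then have "obj C \<beta> gam I L x0 < obj C \<beta> gam I L y" using A unfolding B_def by linarith
      then show ?thesis using xm x0K by force
    qed
  qed (use xm sub in auto)
qed

lemma argmin_prop:
  assumes "\<exists>x\<in>S. \<forall>y\<in>S. f x \<le> f y"
  shows "argmin_on S f \<in> S \<and> (\<forall>y\<in>S. f (argmin_on S f) \<le> f y)"
proof -
  have "\<exists>x. x \<in> S \<and> (\<forall>y\<in>S. f x \<le> f y)" using assms by blast
  then show ?thesis unfolding argmin_on_def by (rule someI_ex)
qed

lemma const_sum:
  assumes "\<forall>i\<in>I. \<forall>j\<in>I. a i = a j" "(\<Sum>i\<in>I. b i) = (0::real)"
  shows "(\<Sum>i\<in>I. a i * b i) = 0"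
proof (cases "I = {}")
  case True then show ?thesis by simp
next
  case False
  then obtain k where k: "k \<in> I" by blast
  have "(\<Sum>i\<in>I. a i * b i) = (\<Sum>i\<in>I. a k * b i)" proof (rule sum.cong[OF refl])
    fix i assume "i \<in> I"
    then have "a i = a k" using assms(1) k by blast
    then show "a i * b i = a k * b i" by simp
  qed
  also have "\<dots> = a k * (\<Sum>i\<in>I. b i)" by (simp add: sum_distrib_left)
  finally show ?thesis using assms(2) by simp
qed

lemma three_point:
  "DI C \<beta> gs gr UNIV x z = DI C \<beta> gs gr UNIV x y + DI C \<beta> gr gr UNIV y z
     + (\<Sum>i\<in>UNIV. (gradphi C \<beta> gr y i - gradphi C \<beta> gr z i) * (x$i - y$i))"
proof -
  have 1: "(\<Sum>i\<in>UNIV. (gradphi C \<beta> gr y i - gradphi C \<beta> gr z i) * (x$i - y$i))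
     = (\<Sum>i\<in>UNIV. gradphi C \<beta> gr y i * (x$i - y$i)) - (\<Sum>i\<in>UNIV. gradphi C \<beta> gr z i * (x$i - y$i))"
    by (simp add: sum_subtractf left_diff_distrib)
  have 2: "(\<Sum>i\<in>UNIV. gradphi C \<beta> gr z i * (x$i - z$i))
     = (\<Sum>i\<in>UNIV. gradphi C \<beta> gr z i * (x$i - y$i)) + (\<Sum>i\<in>UNIV. gradphi C \<beta> gr z i * (y$i - z$i))"
    by (simp add: sum.distrib[symmetric] algebra_simps)
  show ?thesis unfolding DI_def 1 2 by simp
qed

lemma sumUV:
  fixes f :: "'a::finite \<Rightarrow> real"
  assumes "U \<union> V = UNIV" "U \<inter> V = {}"
  shows "sum f UNIV = sum f U + sum f V"
proof -
  have "UNIV = U \<union> V" using assms by simp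
  then show ?thesis using assms(2) sum.union_disjoint[of U V f] by simp
qed

lemma split_UV:
  assumes "U \<union> V = UNIV" "U \<inter> V = {}"
  shows "DI C \<beta> gs gr UNIV x y = DI C \<beta> gs gr U x y + DI C \<beta> gs gr V x y"
proof -
  note e = sumUV[OF assms]
  show ?thesis unfolding DI_def phiI_def e by (simp add: algebra_simps)
qed

theorem lemma1:
  fixes C \<beta> :: real and gt gt1 :: "real^'k" and lhat :: "nat \<Rightarrow> real^'k"
    and t :: nat and U V :: "'k set"
  assumes "0 < \<beta>" "\<beta> < 1" "0 < C"
    and "\<forall>i. 0 < gt$i" "\<forall>i. 0 < gt1$i"
    and "1 \<le> t"
    and "\<forall>\<tau>\<in>{1..t}. \<forall>i. 0 \<le> lhat \<tau> $ i"
    and "U \<union> V = UNIV" "U \<inter> V = {}" "U \<noteq> {}"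
  defines "Lt \<equiv> (\<Sum>\<tau>\<in>{1..<t}. lhat \<tau>)"
    and "Lt1 \<equiv> (\<Sum>\<tau>\<in>{1..t}. lhat \<tau>)"
  defines "pt \<equiv> ftrl C \<beta> gt UNIV 1 Lt"
    and "pt1 \<equiv> ftrl C \<beta> gt1 UNIV 1 Lt1"
    and "qt \<equiv> ftrl C \<beta> gt U 1 Lt"
    and "qt1 \<equiv> ftrl C \<beta> gt1 U 1 Lt1"
  defines "pbar \<equiv> ftrl C \<beta> gt1 U (\<Sum>i\<in>U. pt$i) Lt1 + ftrl C \<beta> gt1 V (\<Sum>i\<in>V. pt$i) Lt1"
  shows "DI C \<beta> gt gt1 UNIV pt pt1 - DI C \<beta> gt gt1 U qt qt1
         \<le> DI C \<beta> gt gt1 V pt pbar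
           + (DI C \<beta> gt gt1 U pt pbar - DI C \<beta> gt gt1 U qt qt1)
           + DI C \<beta> gt1 gt1 UNIV pbar pt1"
proof -
  have Ln: "\<forall>i. 0 \<le> Lt$i" "\<forall>i. 0 \<le> Lt1$i"
    using assms(7) unfolding Lt_def Lt1_def by (auto intro!: sum_nonneg)
  have ex1: "\<exists>x\<in>restr_simplex UNIV 1. \<forall>y\<in>restr_simplex UNIV 1. obj C \<beta> gt UNIV Lt x \<le> obj C \<beta> gt UNIV Lt y"
    by (rule exists_min) (use assms Ln in auto)
  have pt: "pt \<in> restr_simplex UNIV 1"
    using argmin_prop[OF ex1] unfolding pt_def ftrl_eq by blast
  have ex2: "\<exists>x\<in>restr_simplex UNIV 1. \<forall>y\<in>restr_simplex UNIV 1. obj C \<beta> gt1 UNIV Lt1 x \<le> obj C \<beta> gt1 UNIV Lt1 y"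
    by (rule exists_min) (use assms Ln in auto)
  have pt1: "pt1 \<in> restr_simplex UNIV 1"
     "\<forall>y\<in>restr_simplex UNIV 1. obj C \<beta> gt1 UNIV Lt1 pt1 \<le> obj C \<beta> gt1 UNIV Lt1 y"
    using argmin_prop[OF ex2] unfolding pt1_def ftrl_eq by blast+
  have ptpos: "\<forall>i. 0 < pt$i" using pt unfolding restr_simplex_def by auto
  define cU where "cU = (\<Sum>i\<in>U. pt$i)"
  define cV where "cV = (\<Sum>i\<in>V. pt$i)"
  define pU where "pU = ftrl C \<beta> gt1 U cU Lt1"
  define pV where "pV = ftrl C \<beta> gt1 V cV Lt1"
  have pbar: "pbar = pU + pV" unfolding pbar_def pU_def pV_def cU_def cV_def by simp
  have cU: "0 < cU" unfolding cU_def using ptpos assms(10) by (intro sum_pos) auto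
  have ex3: "\<exists>x\<in>restr_simplex U cU. \<forall>y\<in>restr_simplex U cU. obj C \<beta> gt1 U Lt1 x \<le> obj C \<beta> gt1 U Lt1 y"
    by (rule exists_min) (use assms Ln cU in auto)
  have pU: "pU \<in> restr_simplex U cU"
     "\<forall>y\<in>restr_simplex U cU. obj C \<beta> gt1 U Lt1 pU \<le> obj C \<beta> gt1 U Lt1 y"
    using argmin_prop[OF ex3] unfolding pU_def ftrl_eq by blast+
  have ex4: "\<exists>x\<in>restr_simplex V cV. \<forall>y\<in>restr_simplex V cV. obj C \<beta> gt1 V Lt1 x \<le> obj C \<beta> gt1 V Lt1 y"
  proof (cases "V = {}")
    case True
    have "0 \<in> restr_simplex V cV" unfolding restr_simplex_def cV_def using True by simp
    moreover have "y = 0" if "y \<in> restr_simplex V cV" for y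
      using that True unfolding restr_simplex_def by (simp add: vec_eq_iff)
    ultimately show ?thesis by blast
  next
    case False
    have cV: "0 < cV" unfolding cV_def using ptpos False by (intro sum_pos) auto
    show ?thesis by (rule exists_min) (use assms Ln cV False in auto)
  qed
  have pV: "pV \<in> restr_simplex V cV"
     "\<forall>y\<in>restr_simplex V cV. obj C \<beta> gt1 V Lt1 pV \<le> obj C \<beta> gt1 V Lt1 y"
    using argmin_prop[OF ex4] unfolding pV_def ftrl_eq by blast+
  have pbU: "pbar$i = pU$i" if "i \<in> U" for i
    using pV(1) that assms(9) unfolding pbar restr_simplex_def by auto
  have pbV: "pbar$i = pV$i" if "i \<in> V" for i
    using pU(1) that assms(9) unfolding pbar restr_simplex_def by auto
  have sU: "(\<Sum>i\<in>U. pt$i - pbar$i) = 0"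
    using pU(1) pbU unfolding restr_simplex_def cU_def by (simp add: sum_subtractf)
  have sV: "(\<Sum>i\<in>V. pt$i - pbar$i) = 0"
    using pV(1) pbV unfolding restr_simplex_def cV_def by (simp add: sum_subtractf)
  have k1: "Lt1$i + gradphi C \<beta> gt1 pt1 i = Lt1$j + gradphi C \<beta> gt1 pt1 j" for i j
    by (rule kkt[OF assms(2) pt1]) auto
  have kU: "Lt1$i + gradphi C \<beta> gt1 pbar i = Lt1$j + gradphi C \<beta> gt1 pbar j" if "i \<in> U" "j \<in> U" for i j
    using kkt[OF assms(2) pU that] pbU[OF that(1)] pbU[OF that(2)] unfolding gradphi_def by simp
  have kV: "Lt1$i + gradphi C \<beta> gt1 pbar i = Lt1$j + gradphi C \<beta> gt1 pbar j" if "i \<in> V" "j \<in> V" for i j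
    using kkt[OF assms(2) pV that] pbV[OF that(1)] pbV[OF that(2)] unfolding gradphi_def by simp
  have cstU: "\<forall>i\<in>U. \<forall>j\<in>U. gradphi C \<beta> gt1 pbar i - gradphi C \<beta> gt1 pt1 i = gradphi C \<beta> gt1 pbar j - gradphi C \<beta> gt1 pt1 j"
  proof (intro ballI)
    fix i j assume ij: "i \<in> U" "j \<in> U"
    show "gradphi C \<beta> gt1 pbar i - gradphi C \<beta> gt1 pt1 i = gradphi C \<beta> gt1 pbar j - gradphi C \<beta> gt1 pt1 j"
      using kU[OF ij] k1[of i j] by linarith
  qed
  have cstV: "\<forall>i\<in>V. \<forall>j\<in>V. gradphi C \<beta> gt1 pbar i - gradphi C \<beta> gt1 pt1 i = gradphi C \<beta> gt1 pbar j - gradphi C \<beta> gt1 pt1 j"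
  proof (intro ballI)
    fix i j assume ij: "i \<in> V" "j \<in> V"
    show "gradphi C \<beta> gt1 pbar i - gradphi C \<beta> gt1 pt1 i = gradphi C \<beta> gt1 pbar j - gradphi C \<beta> gt1 pt1 j"
      using kV[OF ij] k1[of i j] by linarith
  qed
  have "(\<Sum>i\<in>UNIV. (gradphi C \<beta> gt1 pbar i - gradphi C \<beta> gt1 pt1 i) * (pt$i - pbar$i))
     = (\<Sum>i\<in>U. (gradphi C \<beta> gt1 pbar i - gradphi C \<beta> gt1 pt1 i) * (pt$i - pbar$i))
       + (\<Sum>i\<in>V. (gradphi C \<beta> gt1 pbar i - gradphi C \<beta> gt1 pt1 i) * (pt$i - pbar$i))"
    by (rule sumUV[OF assms(8,9)])
  also have "\<dots> = 0" using const_sum[OF cstU sU] const_sum[OF cstV sV] by simp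
  finally have S0: "(\<Sum>i\<in>UNIV. (gradphi C \<beta> gt1 pbar i - gradphi C \<beta> gt1 pt1 i) * (pt$i - pbar$i)) = 0" .
  show ?thesis
    using three_point[of C \<beta> gt gt1 pt pt1 pbar] S0 split_UV[OF assms(8,9), of C \<beta> gt gt1 pt pbar]
    by linarith
qed

end
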